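(* Let $G$ be a graph, $in\colon\mathrm{dom}(G)\to D$ an inflow on $G$, and $G_1\subseteq G$ (i.e. $G=G_1\uplus G_2$ for some $G_2$). If $in_1=\mathrm{proj}(in,G)(G_1)$, then $\mathrm{flow}(in,G)|_{\mathrm{dom}(G_1)}=\mathrm{flow}(in_1,G_1)$.
   Context: Fix a flow domain $(D,\sqsubseteq,\sqcup,+,\cdot,0,1)$: a positive partially ordered $\omega$-complete semiring, i.e. $(D,\sqsubseteq)$ is an $\omega$-cpo with join $\sqcup$, $(D,+,\cdot,0,1)$ is a semiring, $+$ and $\cdot$ are continuous (preserve suprema of increasing chains), and $0$ is the least element. Fix a node label join-semilattice $(A,\sqsubseteq,\sqcup,a_e)$. A graph $G=(N,N^o,\lambda,\varepsilon)$ has a finite node set $N=\mathrm{dom}(G)$, a finite set of sinks $N^o$ disjoint from $N$, labels $\lambda\colon N\to A$, and edge function $\varepsilon\colon N\times(N\cup N^o)\to D$. The disjoint union $G_1\uplus G_2$ is defined iff $N_1\cap N_2=\emptyset$, and then equals $(N_1\cup N_2,(N_1^o\setminus N_2)\cup(N_2^o\setminus N_1),\lambda_1\uplus\lambda_2,\varepsilon')$ with $\varepsilon'(n_1,n_2)=\varepsilon_i(n_1,n_2)$ if $n_1\in N_i$ and $n_2\in N_i\cup N_i^o$ ($i=1,2$), and $0$ otherwise. $G_1\subseteq G$ iff $G=G_1\uplus G_2$ for some $G_2$. The capacity $\mathrm{cap}(G)$ is the least fixpoint of $\mathrm{cap}(G)(n,n')=\delta(n,n')+\sum_{n''\in N}\varepsilon(n,n'')\cdot\mathrm{cap}(G)(n'',n')$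 ($\delta(n,n')=1$ if $n=n'$, else $0$); the flow of an inflow $in\colon N\to D$ is $\mathrm{flow}(in,G)(n)=\sum_{n'\in N}in(n')\cdot\mathrm{cap}(G)(n',n)$ for $n\in N$. For $G=G_1\uplus G_2$ with edge function $\varepsilon$, the projection of $in$ onto $G_1$ is $\mathrm{proj}(in,G)(G_1)\colon\mathrm{dom}(G_1)\to D$, $\mathrm{proj}(in,G)(G_1)(n)=in(n)+\sum_{n'\in\mathrm{dom}(G)\setminus\mathrm{dom}(G_1)}\mathrm{flow}(in,G)(n')\cdot\varepsilon(n',n)$. *)

theory Defs
  imports Main
begin

class flow_domain = semiring_0 + monoid_mult + order +
  assumes zero_least: "0 \<le> x"
  and omega_complete: "(\<And>i. f i \<le> f (Suc i)) \<Longrightarrow> \<exists>s. (\<forall>i. f i \<le> s) \<and> (\<forall>u. (\<forall>i. f i \<le> u) \<longrightarrow> s \<le> u)"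
  and plus_cont_left: "(\<And>i. f i \<le> f (Suc i)) \<Longrightarrow> (\<forall>i. f i \<le> s) \<Longrightarrow> (\<forall>u. (\<forall>i. f i \<le> u) \<longrightarrow> s \<le> u) \<Longrightarrow> (\<forall>i. f i + a \<le> s + a) \<and> (\<forall>u. (\<forall>i. f i + a \<le> u) \<longrightarrow> s + a \<le> u)"
  and plus_cont_right: "(\<And>i. f i \<le> f (Suc i)) \<Longrightarrow> (\<forall>i. f i \<le> s) \<Longrightarrow> (\<forall>u. (\<forall>i. f i \<le> u) \<longrightarrow> s \<le> u) \<Longrightarrow> (\<forall>i. a + f i \<le> a + s) \<and> (\<forall>u. (\<forall>i. a + f i \<le> u) \<longrightarrow> a + s \<le> u)"
  and mult_cont_left: "(\<And>i. f i \<le> f (Suc i)) \<Longrightarrow> (\<forall>i. f i \<le> s) \<Longrightarrow> (\<forall>u. (\<forall>i. f i \<le> u) \<longrightarrow> s \<le> u) \<Longrightarrow> (\<forall>i. f i * a \<le> s * a) \<and> (\<forall>u. (\<forall>i. f i * a \<le> u) \<longrightarrow> s * a \<le> u)"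
  and mult_cont_right: "(\<And>i. f i \<le> f (Suc i)) \<Longrightarrow> (\<forall>i. f i \<le> s) \<Longrightarrow> (\<forall>u. (\<forall>i. f i \<le> u) \<longrightarrow> s \<le> u) \<Longrightarrow> (\<forall>i. a * f i \<le> a * s) \<and> (\<forall>u. (\<forall>i. a * f i \<le> u) \<longrightarrow> a * s \<le> u)"

text \<open>A graph (N, N^o, lambda, epsilon) with nodes of type 'n, labels of type 'a,
  edge values of type 'd. Functions are total; well-formedness fixes them
  canonically outside their domains.\<close>
datatype ('n, 'a, 'd) graph = Graph (nodes: "'n set") (sinks: "'n set")
  (lab: "'n \<Rightarrow> 'a") (edge: "'n \<Rightarrow> 'n \<Rightarrow> 'd")

definition wf_graph :: "('n, 'a, 'd::zero) graph \<Rightarrow> bool" where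
  "wf_graph G \<longleftrightarrow> finite (nodes G) \<and> finite (sinks G) \<and> nodes G \<inter> sinks G = {}
     \<and> (\<forall>n. n \<notin> nodes G \<longrightarrow> lab G n = undefined)
     \<and> (\<forall>n n'. \<not> (n \<in> nodes G \<and> n' \<in> nodes G \<union> sinks G) \<longrightarrow> edge G n n' = 0)"

text \<open>Disjoint union (meaningful iff the node sets are disjoint).\<close>
definition guplus :: "('n, 'a, 'd::zero) graph \<Rightarrow> ('n, 'a, 'd) graph \<Rightarrow> ('n, 'a, 'd) graph" where
  "guplus G1 G2 = Graph (nodes G1 \<union> nodes G2)
     ((sinks G1 - nodes G2) \<union> (sinks G2 - nodes G1))
     (\<lambda>n. if n \<in> nodes G1 then lab G1 n else if n \<in> nodes G2 then lab G2 n else undefined)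
     (\<lambda>n n'. if n \<in> nodes G1 \<and> n' \<in> nodes G1 \<union> sinks G1 then edge G1 n n'
             else if n \<in> nodes G2 \<and> n' \<in> nodes G2 \<union> sinks G2 then edge G2 n n' else 0)"

definition uplus_defined :: "('n, 'a, 'd) graph \<Rightarrow> ('n, 'a, 'd) graph \<Rightarrow> bool" where
  "uplus_defined G1 G2 \<longleftrightarrow> nodes G1 \<inter> nodes G2 = {}"

definition subgraph :: "('n, 'a, 'd::zero) graph \<Rightarrow> ('n, 'a, 'd) graph \<Rightarrow> bool" where
  "subgraph G1 G \<longleftrightarrow> (\<exists>G2. wf_graph G2 \<and> uplus_defined G1 G2 \<and> G = guplus G1 G2)"

definition delta :: "'n \<Rightarrow> 'n \<Rightarrow> 'd::{zero,one}" where
  "delta n n' = (if n = n' then 1 else 0)"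

definition cap_eq :: "('n, 'a, 'd::flow_domain) graph \<Rightarrow> ('n \<Rightarrow> 'n \<Rightarrow> 'd) \<Rightarrow> bool" where
  "cap_eq G c \<longleftrightarrow> (\<forall>n\<in>nodes G. \<forall>n'\<in>nodes G.
      c n n' = delta n n' + (\<Sum>n''\<in>nodes G. edge G n n'' * c n'' n'))"

definition is_cap :: "('n, 'a, 'd::flow_domain) graph \<Rightarrow> ('n \<Rightarrow> 'n \<Rightarrow> 'd) \<Rightarrow> bool" where
  "is_cap G c \<longleftrightarrow> cap_eq G c
     \<and> (\<forall>c'. cap_eq G c' \<longrightarrow> (\<forall>n\<in>nodes G. \<forall>n'\<in>nodes G. c n n' \<le> c' n n'))
     \<and> (\<forall>n n'. n \<notin> nodes G \<or> n' \<notin> nodes G \<longrightarrow> c n n' = 0)"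

definition cap :: "('n, 'a, 'd::flow_domain) graph \<Rightarrow> 'n \<Rightarrow> 'n \<Rightarrow> 'd" where
  "cap G = (THE c. is_cap G c)"

definition flow :: "('n \<Rightarrow> 'd::flow_domain) \<Rightarrow> ('n, 'a, 'd) graph \<Rightarrow> 'n \<Rightarrow> 'd" where
  "flow infl G n = (\<Sum>n'\<in>nodes G. infl n' * cap G n' n)"

definition proj :: "('n \<Rightarrow> 'd::flow_domain) \<Rightarrow> ('n, 'a, 'd) graph \<Rightarrow> ('n, 'a, 'd) graph \<Rightarrow> 'n \<Rightarrow> 'd" where
  "proj infl G G1 n = infl n + (\<Sum>n'\<in>nodes G - nodes G1. flow infl G n' * edge G n' n)"

end

theory Submission
  imports Defs
begin

definition lubd :: "(nat \<Rightarrow> 'd::order) \<Rightarrow> 'd \<Rightarrow> bool" where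
  "lubd f s \<longleftrightarrow> (\<forall>i. f i \<le> s) \<and> (\<forall>u. (\<forall>i. f i \<le> u) \<longrightarrow> s \<le> u)"

definition chaind :: "(nat \<Rightarrow> 'd::order) \<Rightarrow> bool" where
  "chaind f \<longleftrightarrow> (\<forall>i. f i \<le> f (Suc i))"

lemma lubd_unique: "lubd f s \<Longrightarrow> lubd f t \<Longrightarrow> s = t"
  unfolding lubd_def by (meson order.antisym)

lemma chaind_mono: "chaind f \<Longrightarrow> i \<le> j \<Longrightarrow> f i \<le> f j"
  unfolding chaind_def by (rule lift_Suc_mono_le) auto

lemma lubd_exists: "chaind (f::nat \<Rightarrow> 'd::flow_domain) \<Longrightarrow> \<exists>s. lubd f s"
  unfolding chaind_def lubd_def using omega_complete by blast

lemma lubd_const: "lubd (\<lambda>i. a) a" unfolding lubd_def by auto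

lemma lubd_shift: "chaind f \<Longrightarrow> lubd f s \<Longrightarrow> lubd (\<lambda>i. f (Suc i)) s"
  unfolding lubd_def chaind_def by (meson order.trans)

lemma two_chain: "x \<le> y \<Longrightarrow> chaind (\<lambda>i::nat. if i = 0 then x else y) \<and> lubd (\<lambda>i::nat. if i = 0 then x else y) y"
  unfolding chaind_def lubd_def
proof (intro conjI allI impI)
  fix u assume "\<forall>i::nat. (if i = 0 then x else y) \<le> u"
  from this[rule_format, of 1] show "y \<le> u" by simp
qed auto

lemma add_mono_l: "(x::'d::flow_domain) \<le> y \<Longrightarrow> x + a \<le> y + a"
proof -
  assume "x \<le> y"
  from two_chain[OF this] plus_cont_left[of "\<lambda>i::nat. if i = 0 then x else y" y a]
  have "\<forall>i. (if i = (0::nat) then x else y) + a \<le> y + a" unfolding chaind_def lubd_def by blast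
  from this[rule_format, of 0] show ?thesis by simp
qed

lemma add_mono_r: "(x::'d::flow_domain) \<le> y \<Longrightarrow> a + x \<le> a + y"
proof -
  assume "x \<le> y"
  from two_chain[OF this] plus_cont_right[of "\<lambda>i::nat. if i = 0 then x else y" y a]
  have "\<forall>i. a + (if i = (0::nat) then x else y) \<le> a + y" unfolding chaind_def lubd_def by blast
  from this[rule_format, of 0] show ?thesis by simp
qed

lemma mult_mono_l: "(x::'d::flow_domain) \<le> y \<Longrightarrow> x * a \<le> y * a"
proof -
  assume "x \<le> y"
  from two_chain[OF this] mult_cont_left[of "\<lambda>i::nat. if i = 0 then x else y" y a]
  have "\<forall>i. (if i = (0::nat) then x else y) * a \<le> y * a" unfolding chaind_def lubd_def by blast
  from this[rule_format, of 0] show ?thesis by simp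
qed

lemma mult_mono_r: "(x::'d::flow_domain) \<le> y \<Longrightarrow> a * x \<le> a * y"
proof -
  assume "x \<le> y"
  from two_chain[OF this] mult_cont_right[of "\<lambda>i::nat. if i = 0 then x else y" y a]
  have "\<forall>i. a * (if i = (0::nat) then x else y) \<le> a * y" unfolding chaind_def lubd_def by blast
  from this[rule_format, of 0] show ?thesis by simp
qed

lemma add_mono_d: "(a::'d::flow_domain) \<le> b \<Longrightarrow> c \<le> d \<Longrightarrow> a + c \<le> b + d"
  by (meson add_mono_l add_mono_r order.trans)

lemma sum_mono_d: "(\<And>m. m \<in> A \<Longrightarrow> (f m::'d::flow_domain) \<le> g m) \<Longrightarrow> sum f A \<le> sum g A"
proof (induction A rule: infinite_finite_induct)
  case (infinite A) then show ?case by simp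
next
  case empty then show ?case by simp
next
  case (insert x F) then show ?case by (simp add: add_mono_d)
qed

lemma chaind_add: "chaind (f::nat \<Rightarrow> 'd::flow_domain) \<Longrightarrow> chaind g \<Longrightarrow> chaind (\<lambda>i. f i + g i)"
  unfolding chaind_def by (simp add: add_mono_d)

lemma lubd_add:
  fixes f g :: "nat \<Rightarrow> 'd::flow_domain"
  assumes cf: "chaind f" and cg: "chaind g" and lf: "lubd f s" and lg: "lubd g t"
  shows "lubd (\<lambda>i. f i + g i) (s + t)"
  unfolding lubd_def
proof (intro conjI allI impI)
  fix i
  have "f i \<le> s" "g i \<le> t" using lf lg unfolding lubd_def by auto
  then show "f i + g i \<le> s + t" by (rule add_mono_d)
next
  fix u assume u: "\<forall>i. f i + g i \<le> u"
  have "s + g j \<le> u" for j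
  proof -
    have "f i + g j \<le> u" for i
    proof -
      have "f i \<le> f (max i j)" "g j \<le> g (max i j)"
        using chaind_mono[OF cf, of i "max i j"] chaind_mono[OF cg, of j "max i j"] by auto
      then have "f i + g j \<le> f (max i j) + g (max i j)" by (rule add_mono_d)
      then show ?thesis using u order.trans by blast
    qed
    then show ?thesis using plus_cont_left[of f s "g j"] cf lf unfolding chaind_def lubd_def by blast
  qed
  then show "s + t \<le> u" using plus_cont_right[of g t s] cg lg unfolding chaind_def lubd_def by blast
qed

lemma lubd_mult_l: "chaind (f::nat \<Rightarrow> 'd::flow_domain) \<Longrightarrow> lubd f s \<Longrightarrow> chaind (\<lambda>i. a * f i) \<and> lubd (\<lambda>i. a * f i) (a * s)"
  using mult_cont_right[of f s a] unfolding chaind_def lubd_def by (auto simp: mult_mono_r)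

lemma lubd_mult_r: "chaind (f::nat \<Rightarrow> 'd::flow_domain) \<Longrightarrow> lubd f s \<Longrightarrow> chaind (\<lambda>i. f i * a) \<and> lubd (\<lambda>i. f i * a) (s * a)"
  using mult_cont_left[of f s a] unfolding chaind_def lubd_def by (auto simp: mult_mono_l)

lemma lubd_sum:
  fixes f :: "'m \<Rightarrow> nat \<Rightarrow> 'd::flow_domain"
  assumes "finite A" "\<And>m. m \<in> A \<Longrightarrow> chaind (f m) \<and> lubd (f m) (s m)"
  shows "chaind (\<lambda>i. \<Sum>m\<in>A. f m i) \<and> lubd (\<lambda>i. \<Sum>m\<in>A. f m i) (\<Sum>m\<in>A. s m)"
  using assms
proof (induction A rule: finite_induct)
  case empty then show ?case by (simp add: chaind_def lubd_const)
next
  case (insert x F)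
  then have a: "chaind (\<lambda>i. \<Sum>m\<in>F. f m i) \<and> lubd (\<lambda>i. \<Sum>m\<in>F. f m i) (\<Sum>m\<in>F. s m)" by blast
  have b: "chaind (f x) \<and> lubd (f x) (s x)" using insert by blast
  show ?case using insert(1,2) chaind_add[of "f x" "\<lambda>i. \<Sum>m\<in>F. f m i"]
     lubd_add[of "f x" "\<lambda>i. \<Sum>m\<in>F. f m i"] a b by simp
qed


primrec citer :: "('n,'a,'d::flow_domain) graph \<Rightarrow> nat \<Rightarrow> 'n \<Rightarrow> 'n \<Rightarrow> 'd" where
  "citer G 0 = (\<lambda>n n'. 0)"
| "citer G (Suc k) = (\<lambda>n n'. delta n n' + (\<Sum>n''\<in>nodes G. edge G n n'' * citer G k n'' n'))"

lemma citer_chain: "citer G k n n' \<le> citer G (Suc k) n n'"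
proof (induction k arbitrary: n n')
  case 0 show ?case by (simp add: zero_least)
next
  case (Suc k)
  have "delta n n' + (\<Sum>n''\<in>nodes G. edge G n n'' * citer G k n'' n')
     \<le> delta n n' + (\<Sum>n''\<in>nodes G. edge G n n'' * citer G (Suc k) n'' n')"
    by (intro add_mono_r sum_mono_d mult_mono_r Suc)
  then show ?case by (simp only: citer.simps(2)[of G k] citer.simps(2)[of G "Suc k"])
qed

lemma citer_chaind: "chaind (\<lambda>k. citer G k n n')"
  unfolding chaind_def by (intro allI citer_chain)

definition capC :: "('n,'a,'d::flow_domain) graph \<Rightarrow> 'n \<Rightarrow> 'n \<Rightarrow> 'd" where
  "capC G n n' = (if n \<in> nodes G \<and> n' \<in> nodes G then (THE s. lubd (\<lambda>k. citer G k n n') s) else 0)"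

lemma capC_lub: "n \<in> nodes G \<Longrightarrow> n' \<in> nodes G \<Longrightarrow> lubd (\<lambda>k. citer G k n n') (capC G n n')"
proof -
  assume a: "n \<in> nodes G" "n' \<in> nodes G"
  obtain s where s: "lubd (\<lambda>k. citer G k n n') s" using lubd_exists[OF citer_chaind[of G n n']] by blast
  then have "(THE s. lubd (\<lambda>k. citer G k n n') s) = s" using lubd_unique by blast
  with s a show ?thesis unfolding capC_def by simp
qed

lemma is_cap_capC:
  assumes fin: "finite (nodes G)"
  shows "is_cap G (capC G)"
  unfolding is_cap_def
proof (intro conjI allI impI)
  show "cap_eq G (capC G)" unfolding cap_eq_def
  proof (intro ballI)
    fix n n' assume n: "n \<in> nodes G" and n': "n' \<in> nodes G"
    have l1: "lubd (\<lambda>k. citer G (Suc k) n n') (capC G n n')"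
      by (rule lubd_shift[OF citer_chaind capC_lub[OF n n']])
    have "chaind (\<lambda>k. \<Sum>n''\<in>nodes G. edge G n n'' * citer G k n'' n') \<and>
          lubd (\<lambda>k. \<Sum>n''\<in>nodes G. edge G n n'' * citer G k n'' n') (\<Sum>n''\<in>nodes G. edge G n n'' * capC G n'' n')"
      by (rule lubd_sum[OF fin], rule lubd_mult_l[OF citer_chaind capC_lub], auto simp: n')
    then have "lubd (\<lambda>k. delta n n' + (\<Sum>n''\<in>nodes G. edge G n n'' * citer G k n'' n'))
           (delta n n' + (\<Sum>n''\<in>nodes G. edge G n n'' * capC G n'' n'))"
      using lubd_add[of "\<lambda>k. delta n n'" "\<lambda>k. \<Sum>n''\<in>nodes G. edge G n n'' * citer G k n'' n'",
          OF _ _ lubd_const[of "delta n n'"]] by (auto simp: chaind_def)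
    then show "capC G n n' = delta n n' + (\<Sum>n''\<in>nodes G. edge G n n'' * capC G n'' n')"
      using l1 lubd_unique by auto
  qed
next
  fix c' assume c': "cap_eq G c'"
  have "\<forall>n\<in>nodes G. \<forall>n'\<in>nodes G. citer G k n n' \<le> c' n n'" for k
  proof (induction k)
    case 0 then show ?case by (simp add: zero_least)
  next
    case (Suc k)
    show ?case
    proof (intro ballI)
      fix n n' assume n: "n \<in> nodes G" and n': "n' \<in> nodes G"
      have "citer G (Suc k) n n' \<le> delta n n' + (\<Sum>n''\<in>nodes G. edge G n n'' * c' n'' n')"
        using Suc n' by (simp only: citer.simps, intro add_mono_r sum_mono_d mult_mono_r) auto
      also have "\<dots> = c' n n'" using c' n n' unfolding cap_eq_def by simp
      finally show "citer G (Suc k) n n' \<le> c' n n'" .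
    qed
  qed
  then show "\<forall>n\<in>nodes G. \<forall>n'\<in>nodes G. capC G n n' \<le> c' n n'"
  proof (intro ballI)
    fix n n' assume h: "\<And>k. \<forall>n\<in>nodes G. \<forall>n'\<in>nodes G. citer G k n n' \<le> c' n n'"
      and n: "n \<in> nodes G" and n': "n' \<in> nodes G"
    then have "\<forall>k. citer G k n n' \<le> c' n n'" by blast
    then show "capC G n n' \<le> c' n n'" using capC_lub[OF n n'] unfolding lubd_def by blast
  qed
next
  fix n n' assume "n \<notin> nodes G \<or> n' \<notin> nodes G"
  then show "capC G n n' = 0" unfolding capC_def by auto
qed

lemma is_cap_unique: "is_cap G c \<Longrightarrow> is_cap G c' \<Longrightarrow> c = c'"
proof (intro ext)
  fix x y assume a: "is_cap G c" "is_cap G c'"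
  show "c x y = c' x y"
  proof (cases "x \<in> nodes G \<and> y \<in> nodes G")
    case True
    then show ?thesis using a unfolding is_cap_def by (meson order.antisym)
  next
    case False
    then show ?thesis using a unfolding is_cap_def by auto
  qed
qed

lemma cap_eq_capC: "finite (nodes G) \<Longrightarrow> cap G = capC G"
  unfolding cap_def using is_cap_capC is_cap_unique by blast

lemma cap_lub: "finite (nodes G) \<Longrightarrow> n \<in> nodes G \<Longrightarrow> n' \<in> nodes G \<Longrightarrow> lubd (\<lambda>k. citer G k n n') (cap G n n')"
  using cap_eq_capC capC_lub by metis


lemma sum_delta_left: "finite A \<Longrightarrow> n \<in> A \<Longrightarrow> (\<Sum>m\<in>A. delta n m * (x m::'d::flow_domain)) = x n"
proof -
  assume a: "finite A" "n \<in> A"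
  have "(\<lambda>m. delta n m * x m) = (\<lambda>m. if n = m then x m else 0)" by (auto simp: delta_def fun_eq_iff)
  then have "(\<Sum>m\<in>A. delta n m * x m) = (\<Sum>m\<in>A. if n = m then x m else 0)" by (rule arg_cong[where f="\<lambda>f. sum f A"])
  also have "\<dots> = x n" using a by (simp add: sum.delta)
  finally show ?thesis .
qed

lemma sum_delta_right: "finite A \<Longrightarrow> n \<in> A \<Longrightarrow> (\<Sum>m\<in>A. (x m::'d::flow_domain) * delta m n) = x n"
proof -
  assume a: "finite A" "n \<in> A"
  have "(\<lambda>m. x m * delta m n) = (\<lambda>m. if m = n then x m else 0)" by (auto simp: delta_def fun_eq_iff)
  then have "(\<Sum>m\<in>A. x m * delta m n) = (\<Sum>m\<in>A. if m = n then x m else 0)" by (rule arg_cong[where f="\<lambda>f. sum f A"])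
  also have "\<dots> = x n" using a by (simp add: sum.delta')
  finally show ?thesis .
qed

lemma citer_comm:
  assumes fin: "finite (nodes G)"
  shows "\<forall>n\<in>nodes G. \<forall>n'\<in>nodes G. (\<Sum>m\<in>nodes G. citer G k n m * edge G m n') = (\<Sum>m\<in>nodes G. edge G n m * citer G k m n')"
proof (induction k)
  case 0 show ?case by simp
next
  case (Suc k)
  show ?case
  proof (intro ballI)
    fix n n' assume n: "n \<in> nodes G" and n': "n' \<in> nodes G"
    have "(\<Sum>m\<in>nodes G. citer G (Suc k) n m * edge G m n')
       = (\<Sum>m\<in>nodes G. delta n m * edge G m n') + (\<Sum>m\<in>nodes G. (\<Sum>l\<in>nodes G. edge G n l * citer G k l m) * edge G m n')"
      by (simp add: distrib_right sum.distrib)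
    also have "\<dots> = edge G n n' + (\<Sum>m\<in>nodes G. \<Sum>l\<in>nodes G. edge G n l * citer G k l m * edge G m n')"
      by (simp add: sum_delta_left fin n sum_distrib_right)
    also have "\<dots> = edge G n n' + (\<Sum>l\<in>nodes G. edge G n l * (\<Sum>m\<in>nodes G. citer G k l m * edge G m n'))"
      by (subst sum.swap) (simp add: sum_distrib_left mult.assoc)
    also have "\<dots> = edge G n n' + (\<Sum>l\<in>nodes G. edge G n l * (\<Sum>m\<in>nodes G. edge G l m * citer G k m n'))"
      using Suc.IH n' by (auto intro!: sum.cong)
    also have "\<dots> = (\<Sum>l\<in>nodes G. edge G n l * citer G (Suc k) l n')"
      by (simp add: distrib_left sum.distrib sum_delta_right fin n')
    finally show "(\<Sum>m\<in>nodes G. citer G (Suc k) n m * edge G m n') = (\<Sum>m\<in>nodes G. edge G n m * citer G (Suc k) m n')" .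
  qed
qed

lemma citer_right:
  assumes fin: "finite (nodes G)" and n: "n \<in> nodes G" and n': "n' \<in> nodes G"
  shows "citer G (Suc k) n n' = delta n n' + (\<Sum>m\<in>nodes G. citer G k n m * edge G m n')"
  using citer_comm[OF fin, of k] n n' by simp

definition diter :: "('n \<Rightarrow> 'd::flow_domain) \<Rightarrow> ('n,'a,'d) graph \<Rightarrow> nat \<Rightarrow> 'n \<Rightarrow> 'd" where
  "diter infl G k n = (\<Sum>n'\<in>nodes G. infl n' * citer G k n' n)"

lemma diter_Suc:
  assumes fin: "finite (nodes G)" and n: "n \<in> nodes G"
  shows "diter infl G (Suc k) n = infl n + (\<Sum>m\<in>nodes G. diter infl G k m * edge G m n)"
proof -
  have "diter infl G (Suc k) n = (\<Sum>n'\<in>nodes G. infl n' * (delta n' n + (\<Sum>m\<in>nodes G. citer G k n' m * edge G m n)))"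
    unfolding diter_def using citer_right[OF fin _ n] by (intro sum.cong) auto
  also have "\<dots> = (\<Sum>n'\<in>nodes G. infl n' * delta n' n) + (\<Sum>n'\<in>nodes G. \<Sum>m\<in>nodes G. infl n' * citer G k n' m * edge G m n)"
    by (simp add: distrib_left sum.distrib sum_distrib_left mult.assoc)
  also have "\<dots> = infl n + (\<Sum>m\<in>nodes G. diter infl G k m * edge G m n)"
    unfolding diter_def by (subst sum.swap) (simp add: sum_delta_right fin n sum_distrib_right)
  finally show ?thesis .
qed

lemma flow_lub:
  assumes fin: "finite (nodes G)" and n: "n \<in> nodes G"
  shows "chaind (\<lambda>k. diter infl G k n) \<and> lubd (\<lambda>k. diter infl G k n) (flow infl G n)"
  unfolding diter_def flow_def
  by (rule lubd_sum[OF fin], rule lubd_mult_l[OF citer_chaind cap_lub[OF fin _ n]]) auto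

lemma flow_fix:
  assumes fin: "finite (nodes G)" and n: "n \<in> nodes G"
  shows "flow infl G n = infl n + (\<Sum>m\<in>nodes G. flow infl G m * edge G m n)"
proof -
  have l1: "lubd (\<lambda>k. diter infl G (Suc k) n) (flow infl G n)"
    using flow_lub[OF fin n] lubd_shift by blast
  have "chaind (\<lambda>k. \<Sum>m\<in>nodes G. diter infl G k m * edge G m n) \<and>
        lubd (\<lambda>k. \<Sum>m\<in>nodes G. diter infl G k m * edge G m n) (\<Sum>m\<in>nodes G. flow infl G m * edge G m n)"
    by (rule lubd_sum[OF fin], rule lubd_mult_r) (auto simp: flow_lub[OF fin])
  then have "lubd (\<lambda>k. infl n + (\<Sum>m\<in>nodes G. diter infl G k m * edge G m n))
     (infl n + (\<Sum>m\<in>nodes G. flow infl G m * edge G m n))"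
    using lubd_add[of "\<lambda>k. infl n" "\<lambda>k. \<Sum>m\<in>nodes G. diter infl G k m * edge G m n",
          OF _ _ lubd_const[of "infl n"]] by (auto simp: chaind_def)
  then have "lubd (\<lambda>k. diter infl G (Suc k) n) (infl n + (\<Sum>m\<in>nodes G. flow infl G m * edge G m n))"
    by (simp add: diter_Suc[OF fin n])
  then show ?thesis using l1 lubd_unique by blast
qed

lemma flow_least:
  assumes fin: "finite (nodes G)"
    and x: "\<forall>n\<in>nodes G. infl n + (\<Sum>m\<in>nodes G. x m * edge G m n) \<le> x n"
    and n: "n \<in> nodes G"
  shows "flow infl G n \<le> x n"
proof -
  have "\<forall>n\<in>nodes G. diter infl G k n \<le> x n" for k
  proof (induction k)
    case 0 show ?case by (simp add: diter_def zero_least)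
  next
    case (Suc k)
    show ?case
    proof
      fix n assume n: "n \<in> nodes G"
      have "diter infl G (Suc k) n = infl n + (\<Sum>m\<in>nodes G. diter infl G k m * edge G m n)"
        by (rule diter_Suc[OF fin n])
      also have "\<dots> \<le> infl n + (\<Sum>m\<in>nodes G. x m * edge G m n)"
        using Suc.IH by (intro add_mono_r sum_mono_d mult_mono_l) auto
      also have "\<dots> \<le> x n" using x n by blast
      finally show "diter infl G (Suc k) n \<le> x n" .
    qed
  qed
  then show ?thesis using flow_lub[OF fin n] n unfolding lubd_def by blast
qed


theorem mainTheorem3:
  fixes G G1 :: "('n, 'a::semilattice_sup, 'd::flow_domain) graph"
    and infl infl1 :: "'n \<Rightarrow> 'd"
  assumes "wf_graph G1"
    and "subgraph G1 G"
    and "infl1 = proj infl G G1"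
  shows "\<forall>n\<in>nodes G1. flow infl G n = flow infl1 G1 n"
proof -
  obtain G2 where w2: "wf_graph G2" and dj: "nodes G1 \<inter> nodes G2 = {}" and GG: "G = guplus G1 G2"
    using assms(2) unfolding subgraph_def uplus_defined_def by blast
  define N1 where "N1 = nodes G1"
  define N2 where "N2 = nodes G2"
  have fin1: "finite N1" using assms(1) unfolding wf_graph_def N1_def by blast
  have fin2: "finite N2" using w2 unfolding wf_graph_def N2_def by blast
  have NG: "nodes G = N1 \<union> N2" unfolding GG guplus_def N1_def N2_def by simp
  have finG: "finite (nodes G)" using NG fin1 fin2 by simp
  have dj': "N1 \<inter> N2 = {}" using dj N1_def N2_def by simp
  have ND: "nodes G - nodes G1 = N2" using NG dj' N1_def by auto
  have EE: "edge G m n = edge G1 m n" if "m \<in> N1" "n \<in> N1" for m n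
    using that unfolding GG guplus_def N1_def by simp
  have split: "(\<Sum>m\<in>nodes G. h m) = (\<Sum>m\<in>N1. h m) + (\<Sum>m\<in>N2. h m)" for h :: "'n \<Rightarrow> 'd"
    unfolding NG by (rule sum.union_disjoint[OF fin1 fin2 dj'])
  define f where "f = flow infl G"
  define g where "g = flow infl1 G1"
  have in1: "infl1 n = infl n + (\<Sum>m\<in>N2. f m * edge G m n)" for n
    unfolding assms(3) proj_def ND f_def by simp
  have fin1': "finite (nodes G1)" using fin1 N1_def by simp
  have sumE: "(\<Sum>m\<in>N1. h m * edge G m n) = (\<Sum>m\<in>nodes G1. h m * edge G1 m n)" if "n \<in> N1" for h n
    using EE that unfolding N1_def by (intro sum.cong) auto
  have ffix: "f n = infl1 n + (\<Sum>m\<in>nodes G1. f m * edge G1 m n)" if n: "n \<in> N1" for n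
  proof -
    have "f n = infl n + ((\<Sum>m\<in>N1. f m * edge G m n) + (\<Sum>m\<in>N2. f m * edge G m n))"
      using flow_fix[OF finG, of n infl] n NG split unfolding f_def by simp
    also have "\<dots> = infl1 n + (\<Sum>m\<in>nodes G1. f m * edge G1 m n)"
      using in1 sumE[OF n] by (simp add: ac_simps)
    finally show ?thesis .
  qed
  have gf: "g n \<le> f n" if "n \<in> N1" for n
    unfolding g_def
    by (rule flow_least[OF fin1']) (use ffix that N1_def in auto)
  define x where "x m = (if m \<in> N1 then g m else f m)" for m
  have xpre: "\<forall>n\<in>nodes G. infl n + (\<Sum>m\<in>nodes G. x m * edge G m n) \<le> x n"
  proof
    fix n assume n: "n \<in> nodes G"
    have "infl n + (\<Sum>m\<in>nodes G. x m * edge G m n)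
        = infl n + ((\<Sum>m\<in>N1. g m * edge G m n) + (\<Sum>m\<in>N2. f m * edge G m n))"
      using split[of "\<lambda>m. x m * edge G m n"] dj' unfolding x_def
      by (auto intro!: sum.cong arg_cong2[where f="(+)"])
    also have "\<dots> \<le> x n"
    proof (cases "n \<in> N1")
      case True
      have "g n = infl1 n + (\<Sum>m\<in>nodes G1. g m * edge G1 m n)"
        unfolding g_def by (rule flow_fix[OF fin1']) (use True N1_def in simp)
      then have "infl n + ((\<Sum>m\<in>N1. g m * edge G m n) + (\<Sum>m\<in>N2. f m * edge G m n)) = x n"
        using True in1 sumE[OF True] unfolding x_def by (simp add: ac_simps)
      then show ?thesis by simp
    next
      case False
      have "infl n + ((\<Sum>m\<in>N1. g m * edge G m n) + (\<Sum>m\<in>N2. f m * edge G m n))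
          \<le> infl n + ((\<Sum>m\<in>N1. f m * edge G m n) + (\<Sum>m\<in>N2. f m * edge G m n))"
        using gf by (intro add_mono_r add_mono_l sum_mono_d mult_mono_l) auto
      also have "\<dots> = f n"
        using flow_fix[OF finG n, of infl] split unfolding f_def by simp
      finally show ?thesis using False unfolding x_def by simp
    qed
    finally show "infl n + (\<Sum>m\<in>nodes G. x m * edge G m n) \<le> x n" .
  qed
  show ?thesis
  proof
    fix n assume n: "n \<in> nodes G1"
    then have n1: "n \<in> N1" using N1_def by simp
    have "f n \<le> x n" unfolding f_def by (rule flow_least[OF finG xpre]) (use NG n1 in auto)
    then have "f n \<le> g n" using n1 unfolding x_def by simp
    with gf[OF n1] have "f n = g n" by (simp add: order.antisym)
    then show "flow infl G n = flow infl1 G1 n" unfolding f_def g_def .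
  qed
qed

end
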